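(* Let $S$ be a semiring and $\Sigma$ an alphabet. Then $\mathrm{Rev}(S,\Sigma)$ consists of precisely all finite sums of series from $\mathrm{Rev}_1(S,\Sigma)$; that is, a series $r \in S\langle\langle\Sigma^*\rangle\rangle$ belongs to $\mathrm{Rev}(S,\Sigma)$ if and only if $r = r_1 + \cdots + r_k$ for some $k \in \mathbb{N}$ (the empty sum being the zero series) and some $r_1,\ldots,r_k \in \mathrm{Rev}_1(S,\Sigma)$.
   Context: A semiring $(S,+,\cdot,0,1)$ has $(S,+,0)$ a commutative monoid, $(S,\cdot,1)$ a monoid, $\cdot$ distributing over $+$ on both sides and $0$ absorbing. A formal power series over $S$ and a finite nonempty alphabet $\Sigma$ is a map $r\colon \Sigma^*\to S$, written $(r,w)$ for its value at $w$; the set of these is $S\langle\langle\Sigma^*\rangle\rangle$, with pointwise addition. A weighted automaton over $S$ and $\Sigma$ is $\mathcal{A}=(Q,\sigma,\iota,\tau)$ with $Q$ a finite set, $\sigma\colon Q\times\Sigma\times Q\to S$, and $\iota,\tau\colon Q\to S$ (initial and final weights). A run on $w=a_1\cdots a_t$ is a sequence $q_0a_1q_1\cdots a_tq_t$ with $\sigma(q_{k-1},a_k,q_k)\neq 0$ for all $k$; its weight is $\iota(q_0)\sigma(q_0,a_1,q_1)\cdots\sigma(q_{t-1},a_t,q_t)\tau(q_t)$, and the series $\|\mathcal{A}\|$ realised by $\mathcal{A}$ has $(\|\mathcal{A}\|,w)$ equal to the sum of the weights of all runs on $w$. $\mathcal{A}$ is reversible if for all $p,p',q,q'\in Q$, $a\in\Sigma$: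 (i) if $\sigma(p,a,q)\neq0$ and $\sigma(p,a,q')\neq0$ then $q=q'$; (ii) if $\sigma(p,a,q)\neq0$ and $\sigma(p',a,q)\neq0$ then $p=p'$. $\mathrm{Rev}(S,\Sigma)$ denotes the set of series realised by reversible weighted automata over $S$ and $\Sigma$, and $\mathrm{Rev}_1(S,\Sigma)$ the set of series realised by reversible weighted automata over $S$ and $\Sigma$ having precisely one state $q$ with $\iota(q)\neq 0$. *)

theory Defs
  imports Main
begin

text \<open>Semiring: type class {semiring_0, monoid_mult} (commutative additive monoid,
 multiplicative monoid, two-sided distributivity, 0 absorbing; 0 = 1 allowed).
 Alphabet: a finite (hence nonempty) type 'b.
 Weighted automaton: a finite state set Q :: nat set together with
 sigma :: nat => 'b => nat => 'a, iota, tau :: nat => 'a (only values on Q matter).\<close>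

definition runs :: "nat set \<Rightarrow> (nat \<Rightarrow> 'b \<Rightarrow> nat \<Rightarrow> 'a::zero) \<Rightarrow> 'b list \<Rightarrow> nat list set" where
  "runs Q \<sigma> w = {qs. length qs = Suc (length w) \<and> set qs \<subseteq> Q \<and>
      (\<forall>k < length w. \<sigma> (qs ! k) (w ! k) (qs ! Suc k) \<noteq> 0)}"

definition run_weight ::
  "(nat \<Rightarrow> 'a::monoid_mult) \<Rightarrow> (nat \<Rightarrow> 'b \<Rightarrow> nat \<Rightarrow> 'a) \<Rightarrow> (nat \<Rightarrow> 'a) \<Rightarrow> 'b list \<Rightarrow> nat list \<Rightarrow> 'a" where
  "run_weight \<iota> \<sigma> \<tau> w qs =
     \<iota> (qs ! 0) * prod_list (map (\<lambda>k. \<sigma> (qs ! k) (w ! k) (qs ! Suc k)) [0..<length w])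
       * \<tau> (qs ! length w)"

definition behaviour ::
  "nat set \<Rightarrow> (nat \<Rightarrow> 'b \<Rightarrow> nat \<Rightarrow> 'a::{semiring_0,monoid_mult}) \<Rightarrow> (nat \<Rightarrow> 'a) \<Rightarrow> (nat \<Rightarrow> 'a)
     \<Rightarrow> 'b list \<Rightarrow> 'a" where
  "behaviour Q \<sigma> \<iota> \<tau> = (\<lambda>w. \<Sum>qs \<in> runs Q \<sigma> w. run_weight \<iota> \<sigma> \<tau> w qs)"

definition reversible :: "nat set \<Rightarrow> (nat \<Rightarrow> 'b \<Rightarrow> nat \<Rightarrow> 'a::zero) \<Rightarrow> bool" where
  "reversible Q \<sigma> \<longleftrightarrow>
     (\<forall>p\<in>Q. \<forall>q\<in>Q. \<forall>q'\<in>Q. \<forall>a. \<sigma> p a q \<noteq> 0 \<and> \<sigma> p a q' \<noteq> 0 \<longrightarrow> q = q') \<and>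
     (\<forall>p\<in>Q. \<forall>p'\<in>Q. \<forall>q\<in>Q. \<forall>a. \<sigma> p a q \<noteq> 0 \<and> \<sigma> p' a q \<noteq> 0 \<longrightarrow> p = p')"

definition Rev :: "('b::finite list \<Rightarrow> 'a::{semiring_0,monoid_mult}) set" where
  "Rev = {r. \<exists>Q \<sigma> \<iota> \<tau>. finite Q \<and> reversible Q \<sigma> \<and> r = behaviour Q \<sigma> \<iota> \<tau>}"

definition Rev1 :: "('b::finite list \<Rightarrow> 'a::{semiring_0,monoid_mult}) set" where
  "Rev1 = {r. \<exists>Q \<sigma> \<iota> \<tau>. finite Q \<and> reversible Q \<sigma> \<and> card {q\<in>Q. \<iota> q \<noteq> 0} = 1
              \<and> r = behaviour Q \<sigma> \<iota> \<tau>}"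

end

theory Submission
  imports Defs
begin

lemma finite_runs: "finite Q \<Longrightarrow> finite (runs Q \<sigma> w)"
  unfolding runs_def
  by (rule finite_subset[OF _ finite_lists_length_eq[of Q "Suc (length w)"]]) auto

lemma runs_nonempty: "qs \<in> runs Q \<sigma> w \<Longrightarrow> qs \<noteq> []"
  by (auto simp: runs_def)

definition uQ :: "nat set \<Rightarrow> nat set \<Rightarrow> nat set" where
  "uQ Q1 Q2 = (\<lambda>q. 2*q) ` Q1 \<union> (\<lambda>q. 2*q+1) ` Q2"

definition uS :: "(nat \<Rightarrow> 'b \<Rightarrow> nat \<Rightarrow> 'a::zero) \<Rightarrow> (nat \<Rightarrow> 'b \<Rightarrow> nat \<Rightarrow> 'a) \<Rightarrow> nat \<Rightarrow> 'b \<Rightarrow> nat \<Rightarrow> 'a" where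
  "uS s1 s2 = (\<lambda>x a y. if even x \<and> even y then s1 (x div 2) a (y div 2)
      else if odd x \<and> odd y then s2 (x div 2) a (y div 2) else 0)"

definition uF :: "(nat \<Rightarrow> 'a) \<Rightarrow> (nat \<Rightarrow> 'a) \<Rightarrow> nat \<Rightarrow> 'a" where
  "uF f1 f2 = (\<lambda>x. if even x then f1 (x div 2) else f2 (x div 2))"

lemma parity_run:
  assumes "qs \<in> runs Q (uS s1 s2) w" "k \<le> length w"
  shows "even (qs!k) = even (qs!0)"
  using assms(2)
proof (induction k)
  case 0 then show ?case by simp
next
  case (Suc k)
  then have "uS s1 s2 (qs!k) (w!k) (qs!Suc k) \<noteq> 0" using assms(1) by (auto simp: runs_def)
  then have "even (qs!k) = even (qs!Suc k)" by (auto simp: uS_def split: if_splits)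
  then show ?case using Suc by simp
qed

lemma parity_run_all:
  assumes "qs \<in> runs Q (uS s1 s2) w" "x \<in> set qs"
  shows "even x = even (qs!0)"
proof -
  obtain k where "k < length qs" "x = qs!k" using assms(2) by (auto simp: in_set_conv_nth)
  moreover have "length qs = Suc (length w)" using assms(1) by (auto simp: runs_def)
  ultimately show ?thesis using parity_run[OF assms(1), of k] by simp
qed

lemma runs_union:
  "runs (uQ Q1 Q2) (uS s1 s2) w = map (\<lambda>q. 2*q) ` runs Q1 s1 w \<union> map (\<lambda>q. 2*q+1) ` runs Q2 s2 w"
proof
  show "map (\<lambda>q. 2*q) ` runs Q1 s1 w \<union> map (\<lambda>q. 2*q+1) ` runs Q2 s2 w \<subseteq> runs (uQ Q1 Q2) (uS s1 s2) w"
    apply (auto simp: runs_def uQ_def uS_def)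
    apply blast+
    done
next
  show "runs (uQ Q1 Q2) (uS s1 s2) w \<subseteq> map (\<lambda>q. 2*q) ` runs Q1 s1 w \<union> map (\<lambda>q. 2*q+1) ` runs Q2 s2 w"
  proof
    fix qs assume qs: "qs \<in> runs (uQ Q1 Q2) (uS s1 s2) w"
    have len: "length qs = Suc (length w)" and sub: "set qs \<subseteq> uQ Q1 Q2"
      and nz: "\<And>k. k < length w \<Longrightarrow> uS s1 s2 (qs ! k) (w ! k) (qs ! Suc k) \<noteq> 0"
      using qs by (auto simp: runs_def)
    define ps where "ps = map (\<lambda>x. x div 2) qs"
    show "qs \<in> map (\<lambda>q. 2*q) ` runs Q1 s1 w \<union> map (\<lambda>q. 2*q+1) ` runs Q2 s2 w"
    proof (cases "even (qs!0)")
      case True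
      then have ev: "\<And>x. x \<in> set qs \<Longrightarrow> even x" using parity_run_all[OF qs] by blast
      have eq: "qs = map (\<lambda>q. 2*q) ps" unfolding ps_def map_map
        by (rule sym, rule map_idI) (use ev in auto)
      have "ps \<in> runs Q1 s1 w"
      proof -
        have "set ps \<subseteq> Q1"
        proof
          fix y assume "y \<in> set ps"
          then obtain x where x: "x \<in> set qs" "y = x div 2" by (auto simp: ps_def)
          then show "y \<in> Q1" using sub ev[OF x(1)] by (auto simp: uQ_def)
        qed
        moreover have "s1 (ps ! k) (w ! k) (ps ! Suc k) \<noteq> 0" if "k < length w" for k
        proof -
          have "qs!k \<in> set qs" "qs!Suc k \<in> set qs" using that len by auto
          then show ?thesis using nz[OF that] ev that len by (auto simp: ps_def uS_def)
        qed
        ultimately show ?thesis using len by (auto simp: runs_def ps_def)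
      qed
      then show ?thesis using eq by blast
    next
      case False
      then have ev: "\<And>x. x \<in> set qs \<Longrightarrow> odd x" using parity_run_all[OF qs] by blast
      have eq: "qs = map (\<lambda>q. 2*q+1) ps" unfolding ps_def map_map
        by (rule sym, rule map_idI) (use ev in auto)
      have "ps \<in> runs Q2 s2 w"
      proof -
        have "set ps \<subseteq> Q2"
        proof
          fix y assume "y \<in> set ps"
          then obtain x where x: "x \<in> set qs" "y = x div 2" by (auto simp: ps_def)
          then show "y \<in> Q2" using sub ev[OF x(1)] by (auto simp: uQ_def)
        qed
        moreover have "s2 (ps ! k) (w ! k) (ps ! Suc k) \<noteq> 0" if "k < length w" for k
        proof -
          have "qs!k \<in> set qs" "qs!Suc k \<in> set qs" using that len by auto
          then show ?thesis using nz[OF that] ev that len by (auto simp: ps_def uS_def)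
        qed
        ultimately show ?thesis using len by (auto simp: runs_def ps_def)
      qed
      then show ?thesis using eq by blast
    qed
  qed
qed

lemma rw1:
  assumes "length ps = Suc (length w)"
  shows "run_weight (uF i1 i2) (uS s1 s2) (uF t1 t2) w (map (\<lambda>q. 2*q) ps) = run_weight i1 s1 t1 w ps"
proof -
  have "map (\<lambda>k. uS s1 s2 (map (\<lambda>q. 2*q) ps ! k) (w ! k) (map (\<lambda>q. 2*q) ps ! Suc k)) [0..<length w]
      = map (\<lambda>k. s1 (ps ! k) (w ! k) (ps ! Suc k)) [0..<length w]" (is "?L = ?R")
    using assms by (auto simp: uS_def)
  have h: "prod_list ?L = prod_list ?R" by (simp only: \<open>?L = ?R\<close>)
  show ?thesis unfolding run_weight_def h using assms by (simp add: uF_def)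
qed

lemma rw2:
  assumes "length ps = Suc (length w)"
  shows "run_weight (uF i1 i2) (uS s1 s2) (uF t1 t2) w (map (\<lambda>q. Suc (2*q)) ps) = run_weight i2 s2 t2 w ps"
proof -
  have "map (\<lambda>k. uS s1 s2 (map (\<lambda>q. Suc (2*q)) ps ! k) (w ! k) (map (\<lambda>q. Suc (2*q)) ps ! Suc k)) [0..<length w]
      = map (\<lambda>k. s2 (ps ! k) (w ! k) (ps ! Suc k)) [0..<length w]" (is "?L = ?R")
    using assms by (auto simp: uS_def)
  have h: "prod_list ?L = prod_list ?R" by (simp only: \<open>?L = ?R\<close>)
  show ?thesis unfolding run_weight_def h using assms by (simp add: uF_def)
qed

lemma behaviour_union:
  assumes "finite Q1" "finite Q2"
  shows "behaviour (uQ Q1 Q2) (uS s1 s2) (uF i1 i2) (uF t1 t2) w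
    = behaviour Q1 s1 i1 t1 w + behaviour Q2 s2 i2 t2 w"
proof -
  let ?A = "map (\<lambda>q. 2*q) ` runs Q1 s1 w" and ?B = "map (\<lambda>q. 2*q+1) ` runs Q2 s2 w"
  have inj1: "inj (map (\<lambda>q::nat. 2*q))" by (auto simp: inj_def)
  have inj2: "inj (map (\<lambda>q::nat. 2*q+1))" by (auto simp: inj_def)
  have disj: "?A \<inter> ?B = {}"
  proof (rule ccontr)
    assume "?A \<inter> ?B \<noteq> {}"
    then obtain ps ps' where "ps \<in> runs Q1 s1 w" "ps' \<in> runs Q2 s2 w"
      "map (\<lambda>q. 2*q) ps = map (\<lambda>q. 2*q+1) ps'" by auto
    then have "ps \<noteq> []" "ps' \<noteq> []" "map (\<lambda>q. 2*q) ps ! 0 = map (\<lambda>q. 2*q+1) ps' ! 0"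
      using runs_nonempty by auto
    then have "2 * (ps!0) = 2 * (ps'!0) + (1::nat)" by simp
    then show False by presburger
  qed
  have fA: "finite ?A" and fB: "finite ?B" using assms finite_runs by blast+
  have "behaviour (uQ Q1 Q2) (uS s1 s2) (uF i1 i2) (uF t1 t2) w
      = (\<Sum>qs \<in> ?A \<union> ?B. run_weight (uF i1 i2) (uS s1 s2) (uF t1 t2) w qs)"
    by (simp add: behaviour_def runs_union)
  also have "\<dots> = (\<Sum>qs \<in> ?A. run_weight (uF i1 i2) (uS s1 s2) (uF t1 t2) w qs)
      + (\<Sum>qs \<in> ?B. run_weight (uF i1 i2) (uS s1 s2) (uF t1 t2) w qs)"
    by (rule sum.union_disjoint[OF fA fB disj])
  also have "(\<Sum>qs \<in> ?A. run_weight (uF i1 i2) (uS s1 s2) (uF t1 t2) w qs) = behaviour Q1 s1 i1 t1 w"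
    unfolding behaviour_def
    by (subst sum.reindex) (auto intro!: sum.cong simp: rw1 inj_on_def runs_def)
  also have "(\<Sum>qs \<in> ?B. run_weight (uF i1 i2) (uS s1 s2) (uF t1 t2) w qs) = behaviour Q2 s2 i2 t2 w"
    unfolding behaviour_def
    by (subst sum.reindex) (auto intro!: sum.cong simp: rw2 inj_on_def runs_def)
  finally show ?thesis .
qed

lemma uQ_even: "x \<in> uQ Q1 Q2 \<Longrightarrow> even x \<Longrightarrow> x div 2 \<in> Q1"
  by (auto simp: uQ_def)

lemma uQ_odd: "x \<in> uQ Q1 Q2 \<Longrightarrow> odd x \<Longrightarrow> x div 2 \<in> Q2"
  by (auto simp: uQ_def)

lemma uS_nz: "uS s1 s2 p a q \<noteq> 0 \<Longrightarrow>
   (even p \<and> even q \<and> s1 (p div 2) a (q div 2) \<noteq> 0) \<or> (odd p \<and> odd q \<and> s2 (p div 2) a (q div 2) \<noteq> 0)"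
  by (auto simp: uS_def split: if_splits)

lemma div2_eq: "even p = even q \<Longrightarrow> p div 2 = q div 2 \<Longrightarrow> p = (q::nat)"
  by presburger

lemma reversible_union:
  assumes r1: "reversible Q1 s1" and r2: "reversible Q2 s2"
  shows "reversible (uQ Q1 Q2) (uS s1 s2)"
  unfolding reversible_def
proof (intro conjI ballI allI impI)
  fix p q q' a assume in1: "p \<in> uQ Q1 Q2" "q \<in> uQ Q1 Q2" "q' \<in> uQ Q1 Q2"
    and h: "uS s1 s2 p a q \<noteq> 0 \<and> uS s1 s2 p a q' \<noteq> 0"
  from uS_nz[OF conjunct1[OF h]] uS_nz[OF conjunct2[OF h]]
  consider "even p" "even q" "even q'" "s1 (p div 2) a (q div 2) \<noteq> 0" "s1 (p div 2) a (q' div 2) \<noteq> 0"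
    | "odd p" "odd q" "odd q'" "s2 (p div 2) a (q div 2) \<noteq> 0" "s2 (p div 2) a (q' div 2) \<noteq> 0"
    by blast
  then show "q = q'"
  proof cases
    case 1
    then have "q div 2 = q' div 2" using r1 uQ_even[OF in1(1)] uQ_even[OF in1(2)] uQ_even[OF in1(3)]
      unfolding reversible_def by blast
    then show ?thesis using 1 div2_eq by blast
  next
    case 2
    then have "q div 2 = q' div 2" using r2 uQ_odd[OF in1(1)] uQ_odd[OF in1(2)] uQ_odd[OF in1(3)]
      unfolding reversible_def by blast
    then show ?thesis using 2 div2_eq by blast
  qed
next
  fix p p' q a assume in1: "p \<in> uQ Q1 Q2" "p' \<in> uQ Q1 Q2" "q \<in> uQ Q1 Q2"
    and h: "uS s1 s2 p a q \<noteq> 0 \<and> uS s1 s2 p' a q \<noteq> 0"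
  from uS_nz[OF conjunct1[OF h]] uS_nz[OF conjunct2[OF h]]
  consider "even p" "even p'" "even q" "s1 (p div 2) a (q div 2) \<noteq> 0" "s1 (p' div 2) a (q div 2) \<noteq> 0"
    | "odd p" "odd p'" "odd q" "s2 (p div 2) a (q div 2) \<noteq> 0" "s2 (p' div 2) a (q div 2) \<noteq> 0"
    by blast
  then show "p = p'"
  proof cases
    case 1
    then have "p div 2 = p' div 2" using r1 uQ_even[OF in1(1)] uQ_even[OF in1(2)] uQ_even[OF in1(3)]
      unfolding reversible_def by blast
    then show ?thesis using 1 div2_eq by blast
  next
    case 2
    then have "p div 2 = p' div 2" using r2 uQ_odd[OF in1(1)] uQ_odd[OF in1(2)] uQ_odd[OF in1(3)]
      unfolding reversible_def by blast
    then show ?thesis using 2 div2_eq by blast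
  qed
qed

lemma Rev_add:
  assumes "r1 \<in> Rev" "r2 \<in> Rev"
  shows "(\<lambda>w. r1 w + r2 w) \<in> Rev"
proof -
  obtain Q1 s1 i1 t1 where A: "finite Q1" "reversible Q1 s1" "r1 = behaviour Q1 s1 i1 t1"
    using assms(1) unfolding Rev_def by blast
  obtain Q2 s2 i2 t2 where B: "finite Q2" "reversible Q2 s2" "r2 = behaviour Q2 s2 i2 t2"
    using assms(2) unfolding Rev_def by blast
  have "finite (uQ Q1 Q2)" using A B by (simp add: uQ_def)
  moreover have "reversible (uQ Q1 Q2) (uS s1 s2)" using A B reversible_union by blast
  moreover have "(\<lambda>w. r1 w + r2 w) = behaviour (uQ Q1 Q2) (uS s1 s2) (uF i1 i2) (uF t1 t2)"
    by (rule ext) (simp add: A(3) B(3) behaviour_union[OF A(1) B(1)])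
  ultimately show ?thesis unfolding Rev_def by (intro CollectI exI conjI)
qed

lemma Rev_zero: "(\<lambda>w::'b::finite list. 0::'a::{semiring_0,monoid_mult}) \<in> Rev"
proof -
  have "runs {} \<sigma> w = {}" for \<sigma> :: "nat \<Rightarrow> 'b \<Rightarrow> nat \<Rightarrow> 'a::{semiring_0,monoid_mult}" and w :: "'b list"
    by (auto simp: runs_def)
  then have "(\<lambda>w::'b list. 0::'a) = behaviour {} (\<lambda>_ _ _. 0) (\<lambda>_. 0) (\<lambda>_. 0)"
    by (auto simp: behaviour_def)
  moreover have "reversible {} (\<lambda>_ _ _. 0::'a)" by (simp add: reversible_def)
  ultimately show ?thesis unfolding Rev_def by (intro CollectI exI conjI) simp_all
qed

lemma Rev1_Rev: "r \<in> Rev1 \<Longrightarrow> r \<in> Rev"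
  unfolding Rev1_def Rev_def by blast

lemma sums_Rev:
  fixes k :: nat
  shows "(\<forall>i<k. rs i \<in> Rev1) \<Longrightarrow> (\<lambda>w. \<Sum>i<k. rs i w) \<in> Rev"
proof (induction k)
  case 0 then show ?case using Rev_zero by simp
next
  case (Suc k)
  then have "(\<lambda>w. \<Sum>i<k. rs i w) \<in> Rev" "rs k \<in> Rev" using Rev1_Rev by auto
  from Rev_add[OF this] show ?case by simp
qed

lemma Rev_sums:
  fixes r :: "'b::finite list \<Rightarrow> 'a::{semiring_0,monoid_mult}"
  assumes "r \<in> Rev"
  shows "\<exists>(k::nat) (rs :: nat \<Rightarrow> 'b list \<Rightarrow> 'a). (\<forall>i<k. rs i \<in> Rev1) \<and> r = (\<lambda>w. \<Sum>i<k. rs i w)"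
proof -
  obtain Q \<sigma> \<iota> \<tau> where A: "finite Q" "reversible Q \<sigma>" "r = behaviour Q \<sigma> \<iota> \<tau>"
    using assms unfolding Rev_def by blast
  define I where "I = {q\<in>Q. \<iota> q \<noteq> 0}"
  have fI: "finite I" using A(1) by (simp add: I_def)
  obtain f where f: "bij_betw f {0..<card I} I" using ex_bij_betw_nat_finite[OF fI] by blast
  define k where "k = card I"
  have f': "bij_betw f {..<k} I" using f by (simp add: k_def atLeast0LessThan)
  define \<iota>s where "\<iota>s i q = (if q = f i then \<iota> q else 0)" for i q
  define rs where "rs i = behaviour Q \<sigma> (\<iota>s i) \<tau>" for i
  have "rs i \<in> Rev1" if "i < k" for i
  proof -
    have "f i \<in> I" using f' that by (auto simp: bij_betw_def)
    then have "{q\<in>Q. \<iota>s i q \<noteq> 0} = {f i}" by (auto simp: \<iota>s_def I_def)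
    then have c: "card {q\<in>Q. \<iota>s i q \<noteq> 0} = 1" by simp
    show ?thesis unfolding Rev1_def rs_def using A(1,2) c by blast
  qed
  moreover have "r = (\<lambda>w. \<Sum>i<k. rs i w)"
  proof
    fix w
    have key: "run_weight \<iota> \<sigma> \<tau> w qs = (\<Sum>i<k. run_weight (\<iota>s i) \<sigma> \<tau> w qs)"
      if qs: "qs \<in> runs Q \<sigma> w" for qs
    proof -
      let ?x = "qs ! 0"
      have xQ: "?x \<in> Q" using qs by (auto simp: runs_def)
      have "(\<Sum>i<k. \<iota>s i ?x) = (\<Sum>y\<in>I. (if ?x = y then \<iota> ?x else 0))"
        unfolding \<iota>s_def using sum.reindex_bij_betw[OF f', of "\<lambda>y. if ?x = y then \<iota> ?x else 0"] by simp
      also have "\<dots> = \<iota> ?x" using fI xQ by (auto simp: I_def)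
      finally have s: "(\<Sum>i<k. \<iota>s i ?x) = \<iota> ?x" .
      show ?thesis unfolding run_weight_def s[symmetric] by (simp add: sum_distrib_right)
    qed
    have "r w = (\<Sum>qs\<in>runs Q \<sigma> w. \<Sum>i<k. run_weight (\<iota>s i) \<sigma> \<tau> w qs)"
      using A(3) key by (simp add: behaviour_def)
    also have "\<dots> = (\<Sum>i<k. rs i w)" unfolding rs_def behaviour_def by (rule sum.swap)
    finally show "r w = (\<Sum>i<k. rs i w)" .
  qed
  ultimately show ?thesis by blast
qed

theorem proposition1:
  fixes r :: "'b::finite list \<Rightarrow> 'a::{semiring_0,monoid_mult}"
  shows "r \<in> Rev \<longleftrightarrow>
    (\<exists>(k::nat) (rs :: nat \<Rightarrow> 'b list \<Rightarrow> 'a). (\<forall>i<k. rs i \<in> Rev1) \<and> r = (\<lambda>w. \<Sum>i<k. rs i w))"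
  using Rev_sums sums_Rev by blast

end
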